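(* Let $A,B,C,D,E,F$ be real numbers such that the $8\times 8$ matrix $$\gamma=\begin{pmatrix}\mathcal A&\mathcal C\\ \mathcal C&\mathcal B\end{pmatrix},\quad \mathcal A=\mathrm{diag}(A,B,A,B),\ \mathcal B=\mathrm{diag}(C,D,C,D),\ \mathcal C=\begin{pmatrix}E&0&0&0\\0&0&0&-F\\0&0&-E&0\\0&-F&0&0\end{pmatrix}$$ is the covariance matrix of a four-mode Gaussian state (the generalized Werner–Wolf state), where modes 1,2 form party $A$ and modes 3,4 form party $B$. This state is separable with respect to the bipartition (modes 1,2)$|$(modes 3,4) if and only if $$(AC-E^2)(BD-F^2)-2|EF|-CD-AB+1\geq 0.$$
   Context: Quadratures are ordered as $(\hat x_1,\hat p_1,\hat x_2,\hat p_2,\hat x_3,\hat p_3,\hat x_4,\hat p_4)$ with $[\hat R_j,\hat R_l]=i\sigma_{jl}$, $\sigma=\begin{pmatrix}0&1\\-1&0\end{pmatrix}^{\oplus 4}$. The covariance matrix is $\gamma_{ij}=\langle \hat R_i\hat R_j+\hat R_j\hat R_i\rangle-2\langle\hat R_i\rangle\langle\hat R_j\rangle$ (vacuum has covariance matrix $I$), and $\gamma$ is a valid covariance matrix iff $\gamma+i\sigma\ge 0$. *)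

theory Defs
  imports Complex_Main "HOL-Library.Complex_Order"
begin

text \<open>Real (2n x 2n) matrices are represented as functions nat => nat => real,
  only entries with indices < 2n are relevant. Index k (0-based) corresponds to
  quadrature R_(k+1), ordering (x1,p1,x2,p2,...).\<close>

definition sympl :: "nat \<Rightarrow> nat \<Rightarrow> real" where
  "sympl i j = (if even i \<and> j = i + 1 then 1 else if odd i \<and> i = j + 1 then -1 else 0)"

definition sym_mat :: "nat \<Rightarrow> (nat \<Rightarrow> nat \<Rightarrow> real) \<Rightarrow> bool" where
  "sym_mat m G \<longleftrightarrow> (\<forall>i<m. \<forall>j<m. G i j = G j i)"

definition valid_cm :: "nat \<Rightarrow> (nat \<Rightarrow> nat \<Rightarrow> real) \<Rightarrow> bool" where
  "valid_cm n G \<longleftrightarrow> sym_mat (2*n) G \<and>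
     (\<forall>z :: nat \<Rightarrow> complex.
        0 \<le> (\<Sum>i<2*n. \<Sum>j<2*n. cnj (z i) * (complex_of_real (G i j) + \<i> * complex_of_real (sympl i j)) * z j))"

definition mat_ge :: "nat \<Rightarrow> (nat \<Rightarrow> nat \<Rightarrow> real) \<Rightarrow> (nat \<Rightarrow> nat \<Rightarrow> real) \<Rightarrow> bool" where
  "mat_ge m M N \<longleftrightarrow> (\<forall>x :: nat \<Rightarrow> real. 0 \<le> (\<Sum>i<m. \<Sum>j<m. x i * (M i j - N i j) * x j))"

definition block_diag :: "nat \<Rightarrow> (nat \<Rightarrow> nat \<Rightarrow> real) \<Rightarrow> (nat \<Rightarrow> nat \<Rightarrow> real) \<Rightarrow> nat \<Rightarrow> nat \<Rightarrow> real" where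
  "block_diag k GA GB i j =
     (if i < k \<and> j < k then GA i j
      else if k \<le> i \<and> k \<le> j then GB (i - k) (j - k) else 0)"

text \<open>Separability of a Gaussian state with covariance matrix G of nA+nB modes with
  respect to the bipartition (first nA modes | last nB modes), via the
  Werner--Wolf characterisation: there exist valid covariance matrices
  GA, GB of the parties with G >= GA (+) GB.\<close>
definition gaussian_separable :: "nat \<Rightarrow> nat \<Rightarrow> (nat \<Rightarrow> nat \<Rightarrow> real) \<Rightarrow> bool" where
  "gaussian_separable nA nB G \<longleftrightarrow>
     (\<exists>GA GB. valid_cm nA GA \<and> valid_cm nB GB \<and>
        mat_ge (2*(nA+nB)) G (block_diag (2*nA) GA GB))"

definition ww_cm :: "real \<Rightarrow> real \<Rightarrow> real \<Rightarrow> real \<Rightarrow> real \<Rightarrow> real \<Rightarrow> nat \<Rightarrow> nat \<Rightarrow> real" where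
  "ww_cm A B C D E F i j =
     (if i < 8 \<and> j < 8 then
       [[A, 0, 0, 0,  E, 0, 0, 0],
        [0, B, 0, 0,  0, 0, 0, -F],
        [0, 0, A, 0,  0, 0, -E, 0],
        [0, 0, 0, B,  0, -F, 0, 0],
        [E, 0, 0, 0,  C, 0, 0, 0],
        [0, 0, 0, -F, 0, D, 0, 0],
        [0, 0, -E, 0, 0, 0, C, 0],
        [0, -F, 0, 0, 0, 0, 0, D]] ! i ! j
      else 0)"

end

theory Submission
  imports Defs
begin
lemma swap_zero:
  fixes T :: "nat \<Rightarrow> nat \<Rightarrow> real"
  assumes "\<And>i j. i < m \<Longrightarrow> j < m \<Longrightarrow> T j i = - T i j"
  shows "(\<Sum>i<m. \<Sum>j<m. T i j) = 0"
proof -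
  have "(\<Sum>i<m. \<Sum>j<m. T i j) = (\<Sum>j<m. \<Sum>i<m. T i j)" by (rule sum.swap)
  also have "\<dots> = (\<Sum>j<m. \<Sum>i<m. - T j i)"
    by (rule sum.cong, rule refl, rule sum.cong, rule refl, metis assms lessThan_iff minus_minus)
  also have "\<dots> = - (\<Sum>j<m. \<Sum>i<m. T j i)" by (simp only: sum_negf)
  finally show ?thesis by simp
qed

definition rform :: "nat \<Rightarrow> (nat \<Rightarrow> nat \<Rightarrow> real) \<Rightarrow> (nat \<Rightarrow> real) \<Rightarrow> (nat \<Rightarrow> real) \<Rightarrow> real" where
  "rform m G xi eta = (\<Sum>i<m. \<Sum>j<m. (xi i * xi j + eta i * eta j) * G i j
      - (xi i * eta j - eta i * xi j) * sympl i j)"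

lemma sympl_anti: "sympl j i = - sympl i j"
  by (auto simp: sympl_def)

lemma term_re: "Re (cnj u * (complex_of_real g + \<i> * complex_of_real s) * v)
   = (Re u * Re v + Im u * Im v) * g - (Re u * Im v - Im u * Re v) * s"
  by (simp add: algebra_simps)

lemma term_im: "Im (cnj u * (complex_of_real g + \<i> * complex_of_real s) * v)
   = (Re u * Im v - Im u * Re v) * g + (Re u * Re v + Im u * Im v) * s"
  by (simp add: algebra_simps)

lemma herm_eq:
  assumes "sym_mat m G"
  shows "(\<Sum>i<m. \<Sum>j<m. cnj (z i) * (complex_of_real (G i j) + \<i> * complex_of_real (sympl i j)) * z j)
     = complex_of_real (rform m G (\<lambda>k. Re (z k)) (\<lambda>k. Im (z k)))"
proof (rule complex_eqI)
  show "Re (\<Sum>i<m. \<Sum>j<m. cnj (z i) * (complex_of_real (G i j) + \<i> * complex_of_real (sympl i j)) * z j)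
     = Re (complex_of_real (rform m G (\<lambda>k. Re (z k)) (\<lambda>k. Im (z k))))"
    by (simp only: rform_def Re_sum term_re Re_complex_of_real)
  have "(\<Sum>i<m. \<Sum>j<m. Im (cnj (z i) * (complex_of_real (G i j) + \<i> * complex_of_real (sympl i j)) * z j)) = 0"
  proof (rule swap_zero)
    fix i j assume "i < m" "j < m"
    then have "G j i = G i j" using assms unfolding sym_mat_def by blast
    then show "Im (cnj (z j) * (complex_of_real (G j i) + \<i> * complex_of_real (sympl j i)) * z i) =
         - Im (cnj (z i) * (complex_of_real (G i j) + \<i> * complex_of_real (sympl i j)) * z j)"
      unfolding term_im sympl_anti[of i j] by (simp add: algebra_simps)
  qed
  then show "Im (\<Sum>i<m. \<Sum>j<m. cnj (z i) * (complex_of_real (G i j) + \<i> * complex_of_real (sympl i j)) * z j)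
     = Im (complex_of_real (rform m G (\<lambda>k. Re (z k)) (\<lambda>k. Im (z k))))"
    by (simp only: Im_sum Im_complex_of_real)
qed

lemma valid_cm_real:
  "valid_cm n G \<longleftrightarrow> sym_mat (2*n) G \<and> (\<forall>xi eta. 0 \<le> rform (2*n) G xi eta)"
proof
  assume a: "valid_cm n G"
  then have s: "sym_mat (2*n) G" unfolding valid_cm_def by blast
  have h: "\<forall>z. 0 \<le> (\<Sum>i<2*n. \<Sum>j<2*n. cnj (z i) * (complex_of_real (G i j) + \<i> * complex_of_real (sympl i j)) * z j)"
    using a unfolding valid_cm_def by blast
  have "0 \<le> rform (2*n) G xi eta" for xi eta
  proof -
    have e: "rform (2*n) G xi eta = rform (2*n) G (\<lambda>k. Re (Complex (xi k) (eta k))) (\<lambda>k. Im (Complex (xi k) (eta k)))"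
      by simp
    have "0 \<le> complex_of_real (rform (2*n) G xi eta)"
      unfolding e herm_eq[OF s, symmetric] by (rule spec[OF h, of "\<lambda>k. Complex (xi k) (eta k)"])
    then show ?thesis by (simp add: less_eq_complex_def)
  qed
  then show "sym_mat (2*n) G \<and> (\<forall>xi eta. 0 \<le> rform (2*n) G xi eta)" using s by blast
next
  assume a: "sym_mat (2*n) G \<and> (\<forall>xi eta. 0 \<le> rform (2*n) G xi eta)"
  then have s: "sym_mat (2*n) G" by blast
  show "valid_cm n G" unfolding valid_cm_def
  proof (intro conjI allI)
    show "sym_mat (2*n) G" using s .
    fix z :: "nat \<Rightarrow> complex"
    have "0 \<le> rform (2*n) G (\<lambda>k. Re (z k)) (\<lambda>k. Im (z k))" using a by blast
    then have "0 \<le> complex_of_real (rform (2*n) G (\<lambda>k. Re (z k)) (\<lambda>k. Im (z k)))"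
      by (simp add: less_eq_complex_def)
    then show "0 \<le> (\<Sum>i<2*n. \<Sum>j<2*n. cnj (z i) * (complex_of_real (G i j) + \<i> * complex_of_real (sympl i j)) * z j)"
      unfolding herm_eq[OF s] .
  qed
qed


lemma psd2:
  fixes p q r :: real
  assumes h: "\<And>u v. 0 \<le> p*u*u + 2*q*u*v + r*v*v"
  shows "q*q \<le> p*r" "0 \<le> p" "0 \<le> r"
proof -
  show p0: "0 \<le> p" using h[of 1 0] by simp
  show r0: "0 \<le> r" using h[of 0 1] by simp
  show "q*q \<le> p*r"
  proof (cases "p = 0")
    case True
    have "q = 0"
    proof (rule ccontr)
      assume q: "q \<noteq> 0"
      have "0 \<le> p*(-(r+1)/(2*q))*(-(r+1)/(2*q)) + 2*q*(-(r+1)/(2*q))*1 + r*1*1" by (rule h)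
      also have "\<dots> = -1" using True q by (simp add: field_simps)
      finally show False by simp
    qed
    then show ?thesis using True by simp
  next
    case False
    then have pp: "p > 0" using p0 by simp
    have "0 \<le> p*q*q + 2*q*q*(-p) + r*(-p)*(-p)" using h[of q "-p"] .
    also have "\<dots> = p * (p*r - q*q)" by (simp add: algebra_simps)
    finally have "0 \<le> p * (p*r - q*q)" .
    then have "0 \<le> p*r - q*q" using pp by (simp add: zero_le_mult_iff)
    then show ?thesis by simp
  qed
qed

lemma psd2_conv:
  fixes p q r u v :: real
  assumes "0 \<le> p" "0 \<le> r" "q*q \<le> p*r"
  shows "0 \<le> p*u*u + 2*q*u*v + r*v*v"
proof (cases "p = 0")
  case True
  then have "q*q \<le> 0" using assms by simp
  then have "q = 0" by (metis mult_eq_0_iff not_square_less_zero order_antisym_conv zero_le_square) 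
  then show ?thesis using True assms by (simp add: mult.assoc mult_nonneg_nonneg)
next
  case False
  then have pp: "p > 0" using assms by simp
  have "p * (p*u*u + 2*q*u*v + r*v*v) = (p*u + q*v)*(p*u+q*v) + (p*r - q*q)*v*v"
    by (simp add: algebra_simps)
  also have "\<dots> \<ge> 0"
  proof -
    have "0 \<le> (p*r - q*q) * (v * v)" using assms by (simp add: mult_nonneg_nonneg)
    then show ?thesis by (simp add: mult.assoc add_nonneg_nonneg)
  qed
  finally show ?thesis using pp by (simp add: zero_le_mult_iff)
qed


lemma key:
  fixes A B C D E f :: real
  assumes H: "\<And>y1 y2 z1 z2. 0 \<le> A*y1*y1 + 2*E*y1*y2 + C*y2*y2 + B*z1*z1 + 2*f*z1*z2 + D*z2*z2 + 2*y1*z1 + 2*y2*z2"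
  shows "0 \<le> (A*C - E^2)*(B*D - f^2) - A*B - C*D - 2*E*f + 1"
proof -
  define g where "g = A*C - E^2"
  have h1: "0 \<le> A*u*u + 2*1*u*v + B*v*v" for u v
    using H[of u 0 v 0] by (simp add: algebra_simps)
  have AB: "1*1 \<le> A*B" and A0: "0 \<le> A" using psd2[OF h1] by auto
  have h2: "0 \<le> A*u*u + 2*E*u*v + C*v*v" for u v
    using H[of u v 0 0] by (simp add: algebra_simps)
  have "E*E \<le> A*C" using psd2[OF h2] by auto
  then have g0: "0 \<le> g" by (simp add: g_def power2_eq_square)
  have gnz: "g \<noteq> 0"
  proof
    assume gz: "g = 0"
    have Ap: "A > 0" using AB A0 by (cases "A = 0") auto
    define N0 where "N0 = E*E + A*A"
    define K where "K = B*E*E - 2*f*E*A + D*A*A"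
    define l where "l = -(K+1)"
    define m where "m = 2*N0"
    have N0p: "N0 > 0" using Ap unfolding N0_def by (simp add: add_nonneg_pos)
    have "0 \<le> A*(l*(-E))*(l*(-E)) + 2*E*(l*(-E))*(l*A) + C*(l*A)*(l*A) + B*(m*(-E))*(m*(-E))
       + 2*f*(m*(-E))*(m*A) + D*(m*A)*(m*A) + 2*(l*(-E))*(m*(-E)) + 2*(l*A)*(m*A)" by (rule H)
    also have "\<dots> = l*l*A*g + 2*l*m*N0 + m*m*K"
      unfolding g_def N0_def K_def by (simp add: algebra_simps power2_eq_square)
    also have "\<dots> = - 4*N0*N0" unfolding gz l_def m_def by (simp add: algebra_simps)
    finally have "N0 * N0 \<le> 0" by simp
    moreover have "0 < N0 * N0" using N0p by (simp add: mult_pos_pos)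
    ultimately show False by simp
  qed
  then have gp: "g > 0" using g0 by simp
  define n11 where "n11 = g*B - C"
  define n12 where "n12 = g*f + E"
  define n22 where "n22 = g*D - A"
  have h3: "0 \<le> n11*u*u + 2*n12*u*v + n22*v*v" for u v
  proof -
    have "0 \<le> A*(-(C*u - E*v))*(-(C*u - E*v)) + 2*E*(-(C*u - E*v))*(-(A*v - E*u)) + C*(-(A*v - E*u))*(-(A*v - E*u))
       + B*(g*u)*(g*u) + 2*f*(g*u)*(g*v) + D*(g*v)*(g*v) + 2*(-(C*u - E*v))*(g*u) + 2*(-(A*v - E*u))*(g*v)" by (rule H)
    also have "\<dots> = g * (n11*u*u + 2*n12*u*v + n22*v*v)"
      unfolding g_def n11_def n12_def n22_def by (simp add: algebra_simps power2_eq_square)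
    finally show ?thesis using gp by (simp add: zero_le_mult_iff)
  qed
  have "n12*n12 \<le> n11*n22" using psd2[OF h3] by auto
  moreover have "n11*n22 - n12*n12 = g * ((A*C - E^2)*(B*D - f^2) - A*B - C*D - 2*E*f + 1)"
    unfolding g_def n11_def n12_def n22_def by (simp add: algebra_simps power2_eq_square)
  ultimately have "0 \<le> g * ((A*C - E^2)*(B*D - f^2) - A*B - C*D - 2*E*f + 1)" by simp
  then show ?thesis using gp by (simp add: zero_le_mult_iff)
qed


lemma sum_supp:
  fixes f :: "nat \<Rightarrow> 'a::comm_monoid_add"
  assumes "S \<subseteq> {..<m}" "\<And>k. k \<notin> S \<Longrightarrow> f k = 0"
  shows "(\<Sum>k<m. f k) = (\<Sum>k\<in>S. f k)"
  by (rule sum.mono_neutral_right) (use assms in auto)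

lemma mform_supp0:
  fixes f :: "nat \<Rightarrow> real"
  assumes "S \<subseteq> {..<m}" "\<And>k. k \<notin> S \<Longrightarrow> f k = 0"
  shows "(\<Sum>k<m. f k) = (\<Sum>k\<in>S. f k)"
  by (rule sum.mono_neutral_right) (use assms in auto)

lemma rform_supp:
  fixes m :: nat and S :: "nat set"
  assumes S: "S \<subseteq> {..<m}" and z: "\<And>k. k \<notin> S \<Longrightarrow> xi k = 0 \<and> eta k = 0"
  shows "rform m G xi eta = (\<Sum>i\<in>S. \<Sum>j\<in>S. (xi i * xi j + eta i * eta j) * G i j
      - (xi i * eta j - eta i * xi j) * sympl i j)"
  unfolding rform_def
  by (subst mform_supp0[OF S], simp add: z, rule sum.cong[OF refl], rule mform_supp0[OF S], simp add: z)

lemma mform_supp: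
  fixes m :: nat and M :: "nat \<Rightarrow> nat \<Rightarrow> real"
  assumes S: "S \<subseteq> {..<m}" and z: "\<And>k. k \<notin> S \<Longrightarrow> x k = 0"
  shows "(\<Sum>i<m. \<Sum>j<m. x i * M i j * x j) = (\<Sum>i\<in>S. \<Sum>j\<in>S. x i * M i j * x j)"
proof -
  have "(\<Sum>i<m. \<Sum>j<m. x i * M i j * x j) = (\<Sum>i\<in>S. \<Sum>j<m. x i * M i j * x j)"
    by (rule sum_supp[OF S]) (simp add: z)
  also have "\<dots> = (\<Sum>i\<in>S. \<Sum>j\<in>S. x i * M i j * x j)"
    by (rule sum.cong[OF refl], rule sum_supp[OF S]) (simp add: z)
  finally show ?thesis .
qed

lemma mode_form:
  assumes "valid_cm 2 G" "k < 2"
  shows "0 \<le> G (2*k) (2*k) * y * y + G (2*k+1) (2*k+1) * w * w - 2 * y * w"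
proof -
  let ?xi = "\<lambda>i. if i = 2*k then y else 0"
  let ?eta = "\<lambda>i. if i = 2*k+1 then w else 0"
  have "0 \<le> rform (2*2) G ?xi ?eta" using assms(1) unfolding valid_cm_real by blast
  also have "rform (2*2) G ?xi ?eta = (\<Sum>i\<in>{2*k, 2*k+1}. \<Sum>j\<in>{2*k, 2*k+1}. (?xi i * ?xi j + ?eta i * ?eta j) * G i j
      - (?xi i * ?eta j - ?eta i * ?xi j) * sympl i j)"
    by (rule rform_supp) (use assms(2) in auto)
  also have "\<dots> = G (2*k) (2*k) * y * y + G (2*k+1) (2*k+1) * w * w - 2 * y * w"
    by (simp add: sympl_def algebra_simps)
  finally show ?thesis .
qed

lemma minor_form:
  assumes "mat_ge m M N" "i < m" "j < m" "i \<noteq> j"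
  shows "0 \<le> p*p*(M i i - N i i) + p*q*(M i j - N i j) + q*p*(M j i - N j i) + q*q*(M j j - N j j)"
proof -
  let ?x = "\<lambda>k. if k = i then p else if k = j then q else 0"
  have "0 \<le> (\<Sum>a<m. \<Sum>b<m. ?x a * (M a b - N a b) * ?x b)" using assms(1) unfolding mat_ge_def by (rule spec)
  also have "\<dots> = (\<Sum>a\<in>{i,j}. \<Sum>b\<in>{i,j}. ?x a * (M a b - N a b) * ?x b)"
    by (rule mform_supp) (use assms in auto)
  also have "\<dots> = p*p*(M i i - N i i) + p*q*(M i j - N i j) + q*p*(M j i - N j i) + q*q*(M j j - N j j)"
    using assms(4) by (simp add: algebra_simps)
  finally show ?thesis .
qed


lemma necessity:
  fixes A B C D E F :: real
  assumes "gaussian_separable 2 2 (ww_cm A B C D E F)"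
  shows "(A*C - E^2)*(B*D - F^2) - 2*\<bar>E*F\<bar> - C*D - A*B + 1 \<ge> 0"
proof -
  obtain GA GB where vA: "valid_cm 2 GA" and vB: "valid_cm 2 GB"
    and M: "mat_ge 8 (ww_cm A B C D E F) (block_diag 4 GA GB)"
    using assms unfolding gaussian_separable_def by auto
  let ?G = "ww_cm A B C D E F" and ?N = "block_diag 4 GA GB"
  have m1: "0 \<le> p*p*(A - GA 0 0) + 2*E*p*q + q*q*(C - GB 0 0)" for p q
    using minor_form[OF M, of 0 4 p q] by (simp add: ww_cm_def block_diag_def algebra_simps)
  have m2: "0 \<le> p*p*(A - GA 2 2) - 2*E*p*q + q*q*(C - GB 2 2)" for p q
    using minor_form[OF M, of 2 6 p q] by (simp add: ww_cm_def block_diag_def algebra_simps)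
  have m3: "0 \<le> p*p*(B - GA 1 1) - 2*F*p*q + q*q*(D - GB 3 3)" for p q
    using minor_form[OF M, of 1 7 p q] by (simp add: ww_cm_def block_diag_def algebra_simps)
  have m4: "0 \<le> p*p*(B - GA 3 3) - 2*F*p*q + q*q*(D - GB 1 1)" for p q
    using minor_form[OF M, of 3 5 p q] by (simp add: ww_cm_def block_diag_def algebra_simps)
  have o1: "0 \<le> GA 0 0 * y * y + GA 1 1 * w * w - 2 * y * w" for y w
    using mode_form[OF vA, of 0 y w] by simp
  have o2: "0 \<le> GA 2 2 * y * y + GA 3 3 * w * w - 2 * y * w" for y w
    using mode_form[OF vA, of 1 y w] by simp
  have o3: "0 \<le> GB 0 0 * y * y + GB 1 1 * w * w - 2 * y * w" for y w
    using mode_form[OF vB, of 0 y w] by simp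
  have o4: "0 \<le> GB 2 2 * y * y + GB 3 3 * w * w - 2 * y * w" for y w
    using mode_form[OF vB, of 1 y w] by simp
  have k1: "0 \<le> A*y1*y1 + 2*E*y1*y2 + C*y2*y2 + B*z1*z1 + 2*(-F)*z1*z2 + D*z2*z2 + 2*y1*z1 + 2*y2*z2"
    for y1 y2 z1 z2
  proof -
    have "0 \<le> (y1*y1*(A - GA 0 0) + 2*E*y1*y2 + y2*y2*(C - GB 0 0))
      + (y1*y1*(A - GA 2 2) - 2*E*y1*(-y2) + (-y2)*(-y2)*(C - GB 2 2))
      + (z1*z1*(B - GA 1 1) - 2*F*z1*z2 + z2*z2*(D - GB 3 3))
      + (z1*z1*(B - GA 3 3) - 2*F*z1*z2 + z2*z2*(D - GB 1 1))
      + (GA 0 0 * y1 * y1 + GA 1 1 * (-z1) * (-z1) - 2 * y1 * (-z1))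
      + (GA 2 2 * y1 * y1 + GA 3 3 * (-z1) * (-z1) - 2 * y1 * (-z1))
      + (GB 0 0 * y2 * y2 + GB 1 1 * (-z2) * (-z2) - 2 * y2 * (-z2))
      + (GB 2 2 * y2 * y2 + GB 3 3 * (-z2) * (-z2) - 2 * y2 * (-z2))"
      using m1[of y1 y2] m2[of y1 "-y2"] m3[of z1 z2] m4[of z1 z2] o1[of y1 "-z1"] o2[of y1 "-z1"]
        o3[of y2 "-z2"] o4[of y2 "-z2"] by linarith
    also have "\<dots> = 2 * (A*y1*y1 + 2*E*y1*y2 + C*y2*y2 + B*z1*z1 + 2*(-F)*z1*z2 + D*z2*z2 + 2*y1*z1 + 2*y2*z2)"
      by (simp add: algebra_simps)
    finally show ?thesis by simp
  qed
  have k2: "0 \<le> A*y1*y1 + 2*E*y1*y2 + C*y2*y2 + B*z1*z1 + 2*F*z1*z2 + D*z2*z2 + 2*y1*z1 + 2*y2*z2"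
    for y1 y2 z1 z2
  proof -
    have "0 \<le> (y1*y1*(A - GA 0 0) + 2*E*y1*y2 + y2*y2*(C - GB 0 0))
      + (y1*y1*(A - GA 2 2) - 2*E*y1*(-y2) + (-y2)*(-y2)*(C - GB 2 2))
      + (z1*z1*(B - GA 1 1) - 2*F*z1*(-z2) + (-z2)*(-z2)*(D - GB 3 3))
      + (z1*z1*(B - GA 3 3) - 2*F*z1*(-z2) + (-z2)*(-z2)*(D - GB 1 1))
      + (GA 0 0 * y1 * y1 + GA 1 1 * (-z1) * (-z1) - 2 * y1 * (-z1))
      + (GA 2 2 * y1 * y1 + GA 3 3 * (-z1) * (-z1) - 2 * y1 * (-z1))
      + (GB 0 0 * y2 * y2 + GB 1 1 * (-z2) * (-z2) - 2 * y2 * (-z2))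
      + (GB 2 2 * y2 * y2 + GB 3 3 * (-z2) * (-z2) - 2 * y2 * (-z2))"
      using m1[of y1 y2] m2[of y1 "-y2"] m3[of z1 "-z2"] m4[of z1 "-z2"] o1[of y1 "-z1"] o2[of y1 "-z1"]
        o3[of y2 "-z2"] o4[of y2 "-z2"] by linarith
    also have "\<dots> = 2 * (A*y1*y1 + 2*E*y1*y2 + C*y2*y2 + B*z1*z1 + 2*F*z1*z2 + D*z2*z2 + 2*y1*z1 + 2*y2*z2)"
      by (simp add: algebra_simps)
    finally show ?thesis by simp
  qed
  have X1: "0 \<le> (A*C - E^2)*(B*D - (-F)^2) - A*B - C*D - 2*E*(-F) + 1" by (rule key) (rule k1)
  have X2: "0 \<le> (A*C - E^2)*(B*D - F^2) - A*B - C*D - 2*E*F + 1" by (rule key) (rule k2)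
  show ?thesis
  proof (cases "E*F \<ge> 0")
    case True then show ?thesis using X2 by simp
  next
    case False then show ?thesis using X1 by simp
  qed
qed


lemma valid_facts:
  fixes A B C D E F :: real
  assumes v: "valid_cm 4 (ww_cm A B C D E F)"
  defines "h \<equiv> B*D - F^2"
  shows "1 \<le> A*B" "0 \<le> A" "0 \<le> B" "1 \<le> C*D" "0 \<le> C" "0 \<le> D"
    "E^2 \<le> A*C" "F^2 \<le> B*D" "0 \<le> h*(A*h - D)" "0 \<le> h*(C*h - B)"
proof -
  let ?G = "ww_cm A B C D E F"
  have R: "\<And>xi eta. 0 \<le> rform (2*4) ?G xi eta" using v unfolding valid_cm_real by blast
  have v1: "0 \<le> A*y*y + 2*(-1)*y*w + B*w*w" for y w
  proof -
    have "0 \<le> rform (2*4) ?G (\<lambda>i. if i = 0 then y else 0) (\<lambda>i. if i = 1 then w else 0)" by (rule R)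
    also have "\<dots> = A*y*y + 2*(-1)*y*w + B*w*w"
      by (subst rform_supp[where S="{0,1}"]) (auto simp: ww_cm_def sympl_def algebra_simps)
    finally show ?thesis .
  qed
  show "1 \<le> A*B" "0 \<le> A" "0 \<le> B" using psd2[OF v1] by auto
  have v2: "0 \<le> C*y*y + 2*(-1)*y*w + D*w*w" for y w
  proof -
    have "0 \<le> rform (2*4) ?G (\<lambda>i. if i = 4 then y else 0) (\<lambda>i. if i = 5 then w else 0)" by (rule R)
    also have "\<dots> = C*y*y + 2*(-1)*y*w + D*w*w"
      by (subst rform_supp[where S="{4,5}"]) (auto simp: ww_cm_def sympl_def algebra_simps)
    finally show ?thesis .
  qed
  show "1 \<le> C*D" "0 \<le> C" "0 \<le> D" using psd2[OF v2] by auto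
  have v3: "0 \<le> A*y*y + 2*E*y*w + C*w*w" for y w
  proof -
    have "0 \<le> rform (2*4) ?G (\<lambda>i. if i = 0 then y else if i = 4 then w else 0) (\<lambda>i. 0)" by (rule R)
    also have "\<dots> = A*y*y + 2*E*y*w + C*w*w"
      by (subst rform_supp[where S="{0,4}"]) (auto simp: ww_cm_def sympl_def algebra_simps)
    finally show ?thesis .
  qed
  show "E^2 \<le> A*C" using psd2[OF v3] by (simp add: power2_eq_square)
  have v4: "0 \<le> B*y*y + 2*(-F)*y*w + D*w*w" for y w
  proof -
    have "0 \<le> rform (2*4) ?G (\<lambda>i. if i = 1 then y else if i = 7 then w else 0) (\<lambda>i. 0)" by (rule R)
    also have "\<dots> = B*y*y + 2*(-F)*y*w + D*w*w"
      by (subst rform_supp[where S="{1,7}"]) (auto simp: ww_cm_def sympl_def algebra_simps)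
    finally show ?thesis .
  qed
  show "F^2 \<le> B*D" using psd2[OF v4] by (simp add: power2_eq_square)
  have "0 \<le> rform (2*4) ?G (\<lambda>i. if i = 0 then h else 0) (\<lambda>i. if i = 1 then D else if i = 7 then F else 0)" by (rule R)
  also have "\<dots> = h*(A*h - D)"
    by (subst rform_supp[where S="{0,1,7}"]) (auto simp: ww_cm_def sympl_def algebra_simps h_def power2_eq_square)
  finally show "0 \<le> h*(A*h - D)" .
  have "0 \<le> rform (2*4) ?G (\<lambda>i. if i = 4 then h else 0) (\<lambda>i. if i = 3 then F else if i = 5 then B else 0)" by (rule R)
  also have "\<dots> = h*(C*h - B)"
    by (subst rform_supp[where S="{3,4,5}"]) (auto simp: ww_cm_def sympl_def algebra_simps h_def power2_eq_square)
  finally show "0 \<le> h*(C*h - B)" .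
qed


definition dg :: "real \<Rightarrow> nat \<Rightarrow> nat \<Rightarrow> real" where
  "dg a i j = (if i = j then (if even i then a else 1/a) else 0)"

lemma sum4: "(\<Sum>i<(4::nat). f i) = f 0 + f 1 + f 2 + f 3"
  by (simp add: eval_nat_numeral ac_simps)

lemma sum8: "(\<Sum>i<(8::nat). f i) = f 0 + f 1 + f 2 + f 3 + f 4 + f 5 + f 6 + f 7"
  by (simp add: eval_nat_numeral ac_simps)

lemma dg_valid:
  assumes a: "a > 0"
  shows "valid_cm 2 (dg a)"
  unfolding valid_cm_real
proof (intro conjI allI)
  show "sym_mat (2*2) (dg a)" by (auto simp: sym_mat_def dg_def)
  fix xi eta :: "nat \<Rightarrow> real"
  have q: "(-1)*(-1) \<le> a * (1/a)" "1*1 \<le> a * (1/a)" using a by auto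
  have p: "0 \<le> a" "0 \<le> 1/a" using a by auto
  have "rform (2*2) (dg a) xi eta =
      (a*xi 0*xi 0 + 2*(-1)*xi 0*eta 1 + (1/a)*eta 1*eta 1)
    + (a*eta 0*eta 0 + 2*1*eta 0*xi 1 + (1/a)*xi 1*xi 1)
    + (a*xi 2*xi 2 + 2*(-1)*xi 2*eta 3 + (1/a)*eta 3*eta 3)
    + (a*eta 2*eta 2 + 2*1*eta 2*xi 3 + (1/a)*xi 3*xi 3)"
    unfolding rform_def by (simp add: sum4 dg_def sympl_def algebra_simps)
  also have "\<dots> \<ge> 0"
    using psd2_conv[OF p q(1), of "xi 0" "eta 1"] psd2_conv[OF p q(2), of "eta 0" "xi 1"]
      psd2_conv[OF p q(1), of "xi 2" "eta 3"] psd2_conv[OF p q(2), of "eta 2" "xi 3"]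
    by linarith
  finally show "0 \<le> rform (2*2) (dg a) xi eta" .
qed

lemma dg_mat_ge:
  fixes A B C D E F a c :: real
  assumes h1: "0 \<le> A - a" "0 \<le> C - c" "E*E \<le> (A - a)*(C - c)"
    and h2: "0 \<le> B - 1/a" "0 \<le> D - 1/c" "F*F \<le> (B - 1/a)*(D - 1/c)"
  shows "mat_ge (2*(2+2)) (ww_cm A B C D E F) (block_diag (2*2) (dg a) (dg c))"
  unfolding mat_ge_def
proof
  fix x :: "nat \<Rightarrow> real"
  have e2: "(-E)*(-E) \<le> (A - a)*(C - c)" "(-F)*(-F) \<le> (B - 1/a)*(D - 1/c)" using h1 h2 by auto
  have "(\<Sum>i<2*(2+2). \<Sum>j<2*(2+2). x i * (ww_cm A B C D E F i j - block_diag (2*2) (dg a) (dg c) i j) * x j)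
    = ((A-a)*x 0*x 0 + 2*E*x 0*x 4 + (C-c)*x 4*x 4)
    + ((A-a)*x 2*x 2 + 2*(-E)*x 2*x 6 + (C-c)*x 6*x 6)
    + ((B-1/a)*x 1*x 1 + 2*(-F)*x 1*x 7 + (D-1/c)*x 7*x 7)
    + ((B-1/a)*x 3*x 3 + 2*(-F)*x 3*x 5 + (D-1/c)*x 5*x 5)"
    by (simp add: sum8 ww_cm_def block_diag_def dg_def algebra_simps)
  also have "\<dots> \<ge> 0"
    using psd2_conv[OF h1, of "x 0" "x 4"] psd2_conv[OF h1(1,2) e2(1), of "x 2" "x 6"]
      psd2_conv[OF h2(1,2) e2(2), of "x 1" "x 7"] psd2_conv[OF h2(1,2) e2(2), of "x 3" "x 5"]
    by linarith
  finally show "0 \<le> (\<Sum>i<2*(2+2). \<Sum>j<2*(2+2). x i * (ww_cm A B C D E F i j - block_diag (2*2) (dg a) (dg c) i j) * x j)" .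
qed


lemma constr:
  fixes A B C D E F h P R s t :: real
  assumes hp: "h > 0" and Bp: "B > 0" and Dp: "D > 0" and hd: "h = B*D - F^2"
    and Pd: "P = h*A - D" and Rd: "R = h*C - B"
    and s: "0 \<le> s" "s \<le> P" and t: "0 \<le> t" "t \<le> R"
    and st: "F^2 \<le> s*t" and PR: "h^2*E^2 \<le> (P-s)*(R-t)"
  defines "a \<equiv> (D+s)/h" and "c \<equiv> (B+t)/h"
  shows "0 \<le> A - a" "0 \<le> C - c" "E*E \<le> (A - a)*(C - c)"
    "0 \<le> B - 1/a" "0 \<le> D - 1/c" "F*F \<le> (B - 1/a)*(D - 1/c)" "a > 0" "c > 0"
proof -
  have Aa: "A - a = (P - s)/h" using hp unfolding a_def Pd by (simp add: field_simps)
  have Cc: "C - c = (R - t)/h" using hp unfolding c_def Rd by (simp add: field_simps)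
  show "0 \<le> A - a" "0 \<le> C - c" unfolding Aa Cc using hp s t by auto
  have "(A - a)*(C - c) = ((P-s)*(R-t))/(h^2)" unfolding Aa Cc by (simp add: power2_eq_square)
  moreover have "E*E \<le> ((P-s)*(R-t))/(h^2)" using PR hp by (simp add: field_simps power2_eq_square)
  ultimately show "E*E \<le> (A - a)*(C - c)" by simp
  show ap: "a > 0" "c > 0" unfolding a_def c_def using hp s t Bp Dp by auto
  have Ba: "B - 1/a = (B*s + F^2)/(D+s)" using hp Dp s unfolding a_def hd
    by (simp add: field_simps)
  have Dc: "D - 1/c = (D*t + F^2)/(B+t)" using hp Bp t unfolding c_def hd
    by (simp add: field_simps)
  show "0 \<le> B - 1/a" "0 \<le> D - 1/c" unfolding Ba Dc using Bp Dp s t by auto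
  have "(B*s + F^2)*(D*t + F^2) - F^2*((D+s)*(B+t)) = (s*t - F^2)*h"
    unfolding hd by (simp add: algebra_simps power2_eq_square)
  also have "\<dots> \<ge> 0" using st hp by simp
  finally have "F^2*((D+s)*(B+t)) \<le> (B*s + F^2)*(D*t + F^2)" by simp
  moreover have "(D+s)*(B+t) > 0" using Bp Dp s t by simp
  ultimately have "F^2 \<le> ((B*s + F^2)*(D*t + F^2)) / ((D+s)*(B+t))"
    by (simp add: pos_le_divide_eq mult.commute)
  then show "F*F \<le> (B - 1/a)*(D - 1/c)" unfolding Ba Dc by (simp add: power2_eq_square)
qed


lemma sufficiency:
  fixes A B C D E F :: real
  assumes v: "valid_cm 4 (ww_cm A B C D E F)"
    and cond: "(A*C - E^2)*(B*D - F^2) - 2*\<bar>E*F\<bar> - C*D - A*B + 1 \<ge> 0"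
  shows "gaussian_separable 2 2 (ww_cm A B C D E F)"
proof -
  define h where "h = B*D - F^2"
  define g where "g = A*C - E^2"
  define P where "P = h*A - D"
  define R where "R = h*C - B"
  define ae where "ae = \<bar>E\<bar>"
  define af where "af = \<bar>F\<bar>"
  note vf = valid_facts[OF v, folded h_def]
  have ae2: "E^2 = ae^2" unfolding ae_def by simp
  have af2: "F^2 = af^2" unfolding af_def by simp
  have aef: "\<bar>E*F\<bar> = ae*af" unfolding ae_def af_def by (simp add: abs_mult)
  have ae0: "0 \<le> ae" and af0: "0 \<le> af" unfolding ae_def af_def by simp_all
  have g0: "0 \<le> g" using vf(7) unfolding g_def by simp
  have h0: "0 \<le> h" using vf(8) unfolding h_def by simp
  have X: "0 \<le> g*h - 2*(ae*af) - C*D - A*B + 1" using cond unfolding g_def h_def aef by simp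
  have "0 \<le> 2*(ae*af)" using ae0 af0 by simp
  then have gh: "g*h \<ge> 1" using X vf(1) vf(4) by linarith
  have hp: "h > 0" using gh h0 by (cases "h = 0") auto
  have Bp: "B > 0" and Dp: "D > 0" using vf(1-6) by (auto intro: ccontr)
  have P0: "0 \<le> P" using vf(9) hp unfolding P_def by (simp add: zero_le_mult_iff mult.commute)
  have R0: "0 \<le> R" using vf(10) hp unfolding R_def by (simp add: zero_le_mult_iff mult.commute)
  have "P*R - (h*ae + af)^2 = h*(g*h - 2*(ae*af) - C*D - A*B + 1)"
    unfolding P_def R_def g_def ae2 using h_def unfolding af2 by (simp add: algebra_simps power2_eq_square)
  also have "\<dots> \<ge> 0" using hp X by simp
  finally have PR: "(h*ae + af)^2 \<le> P*R" by simp
  define e where "e = h*ae"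
  have e0: "0 \<le> e" unfolding e_def using hp ae0 by simp
  define s where "s = af*P/(e+af)"
  define t where "t = af*R/(e+af)"
  have sP: "0 \<le> s" "s \<le> P" and tR: "0 \<le> t" "t \<le> R"
  proof -
    show "0 \<le> s" "0 \<le> t" unfolding s_def t_def using af0 e0 P0 R0 by simp_all
    show "s \<le> P" "t \<le> R"
    proof -
      have l1: "af/(e+af) \<le> 1" using e0 af0 by (cases "e + af = 0") (auto simp: divide_le_eq)
      have "af/(e+af)*P \<le> 1*P" by (rule mult_right_mono[OF l1 P0])
      moreover have "af/(e+af)*R \<le> 1*R" by (rule mult_right_mono[OF l1 R0])
      ultimately show "s \<le> P" "t \<le> R" unfolding s_def t_def by simp_all
    qed
  qed
  have key2: "F^2 \<le> s*t \<and> h^2*E^2 \<le> (P-s)*(R-t)"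
  proof (cases "e + af = 0")
    case True
    then have "af = 0" "e = 0" using e0 af0 by auto
    then have "F = 0" "E = 0" using hp unfolding af_def e_def ae_def by auto
    then show ?thesis using P0 R0 True unfolding s_def t_def by simp
  next
    case False
    then have pos: "e + af > 0" using e0 af0 by simp
    have "af^2 * (e+af)^2 \<le> af^2 * (P*R)" using PR unfolding e_def by (simp add: mult_left_mono)
    then have "af^2 \<le> af^2 * (P*R) / (e+af)^2" using pos by (simp add: pos_le_divide_eq)
    also have "\<dots> = s*t" unfolding s_def t_def by (simp add: power2_eq_square field_simps)
    finally have 1: "F^2 \<le> s*t" unfolding af2 .
    have Ps: "P - s = e*P/(e+af)" unfolding s_def using pos by (simp add: field_simps)
    have Rt: "R - t = e*R/(e+af)" unfolding t_def using pos by (simp add: field_simps)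
    have "e^2 * (e+af)^2 \<le> e^2 * (P*R)" using PR unfolding e_def by (simp add: mult_left_mono)
    then have "e^2 \<le> e^2 * (P*R) / (e+af)^2" using pos by (simp add: pos_le_divide_eq)
    also have "\<dots> = (P-s)*(R-t)" unfolding Ps Rt by (simp add: power2_eq_square field_simps)
    finally have "h^2*E^2 \<le> (P-s)*(R-t)" unfolding e_def ae2 by (simp add: power_mult_distrib)
    then show ?thesis using 1 by simp
  qed
  define a where "a = (D+s)/h"
  define c where "c = (B+t)/h"
  note cf = constr[OF hp Bp Dp h_def P_def R_def sP tR conjunct1[OF key2] conjunct2[OF key2], folded a_def c_def]
  have "valid_cm 2 (dg a)" "valid_cm 2 (dg c)" using dg_valid cf(7,8) by auto
  moreover have "mat_ge (2*(2+2)) (ww_cm A B C D E F) (block_diag (2*2) (dg a) (dg c))"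
    by (rule dg_mat_ge) (use cf in auto)
  ultimately show ?thesis unfolding gaussian_separable_def by blast
qed

theorem mainTheorem4:
  fixes A B C D E F :: real
  assumes "valid_cm 4 (ww_cm A B C D E F)"
  shows "gaussian_separable 2 2 (ww_cm A B C D E F) \<longleftrightarrow>
         (A*C - E^2)*(B*D - F^2) - 2*\<bar>E*F\<bar> - C*D - A*B + 1 \<ge> 0"
  using necessity sufficiency[OF assms] by blast

end
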